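(* Let $M$ be a completely regular Hausdorff space. Then the Stone–Čech compactification $\beta M$ of $M$ is homeomorphic to the Gelfand spectrum of the abelian $C^\ast$-algebra $C^{pt}(\mathcal{Q}(\mathcal{T}(M)))$. If, in particular, $M$ is discrete, then $\beta M$ is homeomorphic to $\mathcal{Q}(\mathcal{T}(M))$.
   Context: $\mathcal{T}(M)$ is the lattice of open subsets of $M$. A quasipoint of $\mathcal{T}(M)$ is a maximal dual ideal (maximal nonempty family of open sets not containing $\emptyset$, upward closed and closed under finite intersections); $\mathcal{Q}(\mathcal{T}(M))$ is the set of quasipoints with topology having base $\{\mathfrak{B}\mid U\in\mathfrak{B}\}$, $U\in\mathcal{T}(M)$. $\mathfrak{B}$ is over $x\in M$ if $x\in\bigcap_{U\in\mathfrak{B}}\overline{U}$ (at most one such $x$ since $M$ is Hausdorff); $\mathcal{Q}^{pt}(\mathcal{T}(M))$ is the set of quasipoints over some point, and $pt:\mathcal{Q}^{pt}(\mathcal{T}(M))\to M$ sends a quasipoint over $x$ to $x$. $C^{pt}(\mathcal{Q}(\mathcal{T}(M)))$ is the $C^\ast$-algebra of continuous functions $\mathcal{Q}(\mathcal{T}(M))\to\mathbb{C}$ that are constant on each fibre of $pt$. *)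

theory Defs
  imports "HOL-Analysis.Analysis"
begin

definition dual_ideal :: "'a topology \<Rightarrow> 'a set set \<Rightarrow> bool" where
  "dual_ideal M B \<longleftrightarrow>
     B \<noteq> {} \<and> (\<forall>U\<in>B. openin M U) \<and> {} \<notin> B \<and>
     (\<forall>U V. U \<in> B \<and> openin M V \<and> U \<subseteq> V \<longrightarrow> V \<in> B) \<and>
     (\<forall>U V. U \<in> B \<and> V \<in> B \<longrightarrow> U \<inter> V \<in> B)"

definition quasipoint :: "'a topology \<Rightarrow> 'a set set \<Rightarrow> bool" where
  "quasipoint M B \<longleftrightarrow> dual_ideal M B \<and> (\<forall>C. dual_ideal M C \<and> B \<subseteq> C \<longrightarrow> C = B)"

definition quasipoint_space :: "'a topology \<Rightarrow> 'a set set topology" where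
  "quasipoint_space M =
     topology_generated_by {{B. quasipoint M B \<and> U \<in> B} | U. openin M U}"

definition quasipoint_over :: "'a topology \<Rightarrow> 'a set set \<Rightarrow> 'a \<Rightarrow> bool" where
  "quasipoint_over M B x \<longleftrightarrow> quasipoint M B \<and> x \<in> topspace M \<and> (\<forall>U\<in>B. x \<in> M closure_of U)"

text \<open>C^pt(Q(T(M))): continuous complex functions on Q(T(M)) constant on the fibres of pt.
  Functions are normalised to be 0 outside the space so that equality of functions is
  equality as elements of the algebra.\<close>
definition Cpt :: "'a topology \<Rightarrow> ('a set set \<Rightarrow> complex) set" where
  "Cpt M = {f. continuous_map (quasipoint_space M) euclidean f \<and>
               (\<forall>B. B \<notin> topspace (quasipoint_space M) \<longrightarrow> f B = 0) \<and>
               (\<forall>x B1 B2. quasipoint_over M B1 x \<and> quasipoint_over M B2 x \<longrightarrow> f B1 = f B2)}"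

definition character :: "('b \<Rightarrow> complex) set \<Rightarrow> (('b \<Rightarrow> complex) \<Rightarrow> complex) \<Rightarrow> bool" where
  "character A \<phi> \<longleftrightarrow> \<phi> \<in> extensional A \<and>
     (\<forall>f\<in>A. \<forall>g\<in>A. \<phi> (\<lambda>x. f x + g x) = \<phi> f + \<phi> g) \<and>
     (\<forall>f\<in>A. \<forall>c. \<phi> (\<lambda>x. c * f x) = c * \<phi> f) \<and>
     (\<forall>f\<in>A. \<forall>g\<in>A. \<phi> (\<lambda>x. f x * g x) = \<phi> f * \<phi> g) \<and>
     (\<exists>f\<in>A. \<phi> f \<noteq> 0)"

definition gelfand_spectrum :: "('b \<Rightarrow> complex) set \<Rightarrow> (('b \<Rightarrow> complex) \<Rightarrow> complex) topology" where
  "gelfand_spectrum A =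
     subtopology (product_topology (\<lambda>_. euclidean) A) {\<phi>. character A \<phi>}"

definition stone_cech :: "'a topology \<Rightarrow> 'b topology \<Rightarrow> ('a \<Rightarrow> 'b) \<Rightarrow> bool" where
  "stone_cech M Y e \<longleftrightarrow>
     compact_space Y \<and> Hausdorff_space Y \<and> embedding_map M Y e \<and>
     Y closure_of (e ` topspace M) = topspace Y \<and>
     (\<forall>f. continuous_map M euclideanreal f \<and> bounded (f ` topspace M) \<longrightarrow>
        (\<exists>g. continuous_map Y euclideanreal g \<and> (\<forall>x\<in>topspace M. g (e x) = f x)))"

end

theory Submission
  imports Defs
begin

lemma qp_dual: "quasipoint M B \<Longrightarrow> dual_ideal M B"
  unfolding quasipoint_def by (erule conjunct1)

lemma qp_open: "quasipoint M B \<Longrightarrow> U \<in> B \<Longrightarrow> openin M U"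
  unfolding quasipoint_def dual_ideal_def by blast

lemma qp_nonempty: "quasipoint M B \<Longrightarrow> U \<in> B \<Longrightarrow> U \<noteq> {}"
  unfolding quasipoint_def dual_ideal_def by blast

lemma qp_Int: "quasipoint M B \<Longrightarrow> U \<in> B \<Longrightarrow> V \<in> B \<Longrightarrow> U \<inter> V \<in> B"
  unfolding quasipoint_def dual_ideal_def by blast

lemma qp_up: "quasipoint M B \<Longrightarrow> U \<in> B \<Longrightarrow> openin M V \<Longrightarrow> U \<subseteq> V \<Longrightarrow> V \<in> B"
  unfolding quasipoint_def dual_ideal_def by blast

lemma qp_top: "quasipoint M B \<Longrightarrow> topspace M \<in> B"
proof -
  assume q: "quasipoint M B"
  then have "B \<noteq> {}" unfolding quasipoint_def dual_ideal_def by blast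
  then obtain U where "U \<in> B" by blast
  then show ?thesis using qp_up[OF q \<open>U \<in> B\<close>] qp_open[OF q \<open>U \<in> B\<close>] openin_subset by blast
qed

lemma topspace_Q: "topspace (quasipoint_space M) = {B. quasipoint M B}"
proof -
  have "topspace (quasipoint_space M) = \<Union>{{B. quasipoint M B \<and> U \<in> B} | U. openin M U}"
    unfolding quasipoint_space_def by (rule topology_generated_by_topspace)
  also have "\<dots> = {B. quasipoint M B}"
  proof
    show "\<Union>{{B. quasipoint M B \<and> U \<in> B} | U. openin M U} \<subseteq> {B. quasipoint M B}" by blast
    show "{B. quasipoint M B} \<subseteq> \<Union>{{B. quasipoint M B \<and> U \<in> B} | U. openin M U}"
    proof
      fix B assume "B \<in> {B. quasipoint M B}"
      then have "B \<in> {B. quasipoint M B \<and> topspace M \<in> B}" using qp_top by blast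
      then show "B \<in> \<Union>{{B. quasipoint M B \<and> U \<in> B} | U. openin M U}"
        using openin_topspace[of M] by blast
    qed
  qed
  finally show ?thesis .
qed

lemma openin_Q_basic:
  "openin M U \<Longrightarrow> openin (quasipoint_space M) {B. quasipoint M B \<and> U \<in> B}"
  unfolding quasipoint_space_def
  by (rule topology_generated_by_Basis) blast

lemma openin_Q_nbhd:
  assumes "openin (quasipoint_space M) T" "B \<in> T"
  shows "\<exists>U. openin M U \<and> U \<in> B \<and> {B. quasipoint M B \<and> U \<in> B} \<subseteq> T"
proof -
  have "B \<in> topspace (quasipoint_space M)" using assms openin_subset by blast
  then have q: "quasipoint M B" unfolding topspace_Q by blast
  have g: "generate_topology_on {{B. quasipoint M B \<and> U \<in> B} | U. openin M U} T"
    using assms(1) unfolding quasipoint_space_def by (rule openin_topology_generated_by)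
  have "\<forall>B\<in>T. quasipoint M B \<longrightarrow> (\<exists>U. openin M U \<and> U \<in> B \<and> {B. quasipoint M B \<and> U \<in> B} \<subseteq> T)"
    using g
  proof induction
    case Empty then show ?case by simp
  next
    case (Int a b)
    show ?case
    proof (intro ballI impI)
      fix B assume "B \<in> a \<inter> b" "quasipoint M B"
      from this(1) have "B \<in> a" "B \<in> b" by auto
      obtain U1 where "openin M U1" "U1 \<in> B" "{B. quasipoint M B \<and> U1 \<in> B} \<subseteq> a"
        using Int.IH(1) \<open>B \<in> a\<close> \<open>quasipoint M B\<close> by blast
      obtain U2 where "openin M U2" "U2 \<in> B" "{B. quasipoint M B \<and> U2 \<in> B} \<subseteq> b"
        using Int.IH(2) \<open>B \<in> b\<close> \<open>quasipoint M B\<close> by blast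
      then show "\<exists>U. openin M U \<and> U \<in> B \<and> {B. quasipoint M B \<and> U \<in> B} \<subseteq> a \<inter> b"
      proof (intro exI[of _ "U1 \<inter> U2"] conjI)
        show "openin M (U1 \<inter> U2)" using \<open>openin M U1\<close> \<open>openin M U2\<close> by blast
        show "U1 \<inter> U2 \<in> B" using qp_Int[OF \<open>quasipoint M B\<close> \<open>U1 \<in> B\<close> \<open>U2 \<in> B\<close>] .
        have "{B. quasipoint M B \<and> U1 \<inter> U2 \<in> B} \<subseteq> {B. quasipoint M B \<and> U1 \<in> B}"
          using qp_up[of M _ "U1 \<inter> U2" U1] \<open>openin M U1\<close> by blast
        moreover have "{B. quasipoint M B \<and> U1 \<inter> U2 \<in> B} \<subseteq> {B. quasipoint M B \<and> U2 \<in> B}"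
          using qp_up[of M _ "U1 \<inter> U2" U2] \<open>openin M U2\<close> by blast
        ultimately show "{B. quasipoint M B \<and> U1 \<inter> U2 \<in> B} \<subseteq> a \<inter> b"
          using \<open>{B. quasipoint M B \<and> U1 \<in> B} \<subseteq> a\<close> \<open>{B. quasipoint M B \<and> U2 \<in> B} \<subseteq> b\<close> by blast
      qed
    qed
  next
    case (UN K)
    show ?case
    proof (intro ballI impI)
      fix B assume "B \<in> \<Union>K" "quasipoint M B"
      then obtain k where "k \<in> K" "B \<in> k" by blast
      then obtain U where "openin M U \<and> U \<in> B \<and> {B. quasipoint M B \<and> U \<in> B} \<subseteq> k"
        using UN.IH \<open>quasipoint M B\<close> by blast
      then show "\<exists>U. openin M U \<and> U \<in> B \<and> {B. quasipoint M B \<and> U \<in> B} \<subseteq> \<Union>K"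
        using \<open>k \<in> K\<close> by blast
    qed
  next
    case (Basis s)
    then obtain U where U: "s = {B. quasipoint M B \<and> U \<in> B}" "openin M U" by blast
    show ?case
    proof (intro ballI impI)
      fix B assume "B \<in> s" "quasipoint M B"
      then have "U \<in> B" using U by blast
      then show "\<exists>U. openin M U \<and> U \<in> B \<and> {B. quasipoint M B \<and> U \<in> B} \<subseteq> s"
        using U by blast
    qed
  qed
  then show ?thesis using assms(2) q by blast
qed

lemma openin_Q_criterion:
  assumes "\<And>B. B \<in> T \<Longrightarrow> quasipoint M B" "\<And>B. B \<in> T \<Longrightarrow> \<exists>U. openin M U \<and> U \<in> B \<and> {B. quasipoint M B \<and> U \<in> B} \<subseteq> T"
  shows "openin (quasipoint_space M) T"
proof (subst openin_subopen, intro ballI)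
  fix B assume "B \<in> T"
  then obtain U where "openin M U" "U \<in> B" "{B. quasipoint M B \<and> U \<in> B} \<subseteq> T" using assms(2) by blast
  then show "\<exists>T'. openin (quasipoint_space M) T' \<and> B \<in> T' \<and> T' \<subseteq> T"
    using openin_Q_basic[of M U] assms(1)[OF \<open>B \<in> T\<close>] by blast
qed

lemma qp_max:
  assumes q: "quasipoint M B" and W: "openin M W" "W \<notin> B"
  shows "\<exists>V\<in>B. V \<inter> W = {}"
proof (rule ccontr)
  assume "\<not> ?thesis"
  then have ne: "\<And>V. V \<in> B \<Longrightarrow> V \<inter> W \<noteq> {}" by blast
  define C where "C = {V'. openin M V' \<and> (\<exists>U\<in>B. U \<inter> W \<subseteq> V')}"
  have C1: "C \<noteq> {}" using W qp_top[OF q] unfolding C_def by blast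
  have C2: "\<forall>U\<in>C. openin M U" unfolding C_def by blast
  have C3: "{} \<notin> C" using ne unfolding C_def by auto
  have C4: "\<forall>U V. U \<in> C \<and> openin M V \<and> U \<subseteq> V \<longrightarrow> V \<in> C"
  proof (intro allI impI)
    fix U V assume a: "U \<in> C \<and> openin M V \<and> U \<subseteq> V"
    then obtain U1 where "U1 \<in> B" "U1 \<inter> W \<subseteq> U" unfolding C_def by blast
    then show "V \<in> C" using a unfolding C_def by blast
  qed
  have C5: "\<forall>U V. U \<in> C \<and> V \<in> C \<longrightarrow> U \<inter> V \<in> C"
  proof (intro allI impI)
    fix U V assume a: "U \<in> C \<and> V \<in> C"
    then obtain U1 where "U1 \<in> B" "U1 \<inter> W \<subseteq> U" unfolding C_def by blast
    obtain U2 where "U2 \<in> B" "U2 \<inter> W \<subseteq> V" using a unfolding C_def by blast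
    have "U1 \<inter> U2 \<in> B" using qp_Int[OF q \<open>U1 \<in> B\<close> \<open>U2 \<in> B\<close>] .
    moreover have "(U1 \<inter> U2) \<inter> W \<subseteq> U \<inter> V" using \<open>U1 \<inter> W \<subseteq> U\<close> \<open>U2 \<inter> W \<subseteq> V\<close> by blast
    moreover have "openin M (U \<inter> V)" using a C2 by blast
    ultimately show "U \<inter> V \<in> C" unfolding C_def by blast
  qed
  have "dual_ideal M C" unfolding dual_ideal_def using C1 C2 C3 C4 C5 by blast
  moreover have "B \<subseteq> C"
  proof
    fix V assume "V \<in> B"
    then show "V \<in> C" unfolding C_def using qp_open[OF q \<open>V \<in> B\<close>] by blast
  qed
  ultimately have "C = B" using q unfolding quasipoint_def by blast
  moreover have "W \<in> C" unfolding C_def using W qp_top[OF q] by blast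
  ultimately show False using W by blast
qed

lemma qp_prime_Un:
  assumes q: "quasipoint M B" and "openin M U1" "openin M U2" "U1 \<union> U2 \<in> B"
  shows "U1 \<in> B \<or> U2 \<in> B"
proof (rule ccontr)
  assume "\<not> ?thesis"
  then have "U1 \<notin> B" "U2 \<notin> B" by auto
  obtain V1 where "V1 \<in> B" "V1 \<inter> U1 = {}" using qp_max[OF q assms(2) \<open>U1 \<notin> B\<close>] by blast
  obtain V2 where "V2 \<in> B" "V2 \<inter> U2 = {}" using qp_max[OF q assms(3) \<open>U2 \<notin> B\<close>] by blast
  have "(U1 \<union> U2) \<inter> (V1 \<inter> V2) \<in> B"
    using qp_Int[OF q assms(4) qp_Int[OF q \<open>V1 \<in> B\<close> \<open>V2 \<in> B\<close>]] .
  moreover have "(U1 \<union> U2) \<inter> (V1 \<inter> V2) = {}" using \<open>V1 \<inter> U1 = {}\<close> \<open>V2 \<inter> U2 = {}\<close> by blast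
  ultimately show False using qp_nonempty[OF q] by metis
qed

lemma qp_prime:
  assumes q: "quasipoint M B" and "finite F" "\<forall>U\<in>F. openin M U" "\<Union>F \<in> B"
  shows "\<exists>U\<in>F. U \<in> B"
  using assms(2-)
proof (induction F rule: finite_induct)
  case empty then show ?case using qp_nonempty[OF q] by auto
next
  case (insert x F)
  have "openin M (\<Union>F)" using insert.prems by auto
  moreover have "openin M x" using insert.prems by auto
  moreover have "x \<union> \<Union>F \<in> B" using insert.prems by auto
  ultimately have "x \<in> B \<or> \<Union>F \<in> B" using qp_prime_Un[OF q] by blast
  then show ?case using insert by auto
qed

lemma qp_extend:
  assumes S1: "S \<noteq> {}" and S2: "\<forall>W\<in>S. openin M W" and S3: "{} \<notin> S"
    and S4: "\<forall>U V. U \<in> S \<and> V \<in> S \<longrightarrow> U \<inter> V \<in> S"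
  shows "\<exists>B. quasipoint M B \<and> S \<subseteq> B"
proof -
  define D where "D = {V. openin M V \<and> (\<exists>W\<in>S. W \<subseteq> V)}"
  have D1: "D \<noteq> {}" using S1 S2 unfolding D_def by blast
  have D2: "\<forall>U\<in>D. openin M U" unfolding D_def by blast
  have D3: "{} \<notin> D" using S3 unfolding D_def by auto
  have D4: "\<forall>U V. U \<in> D \<and> openin M V \<and> U \<subseteq> V \<longrightarrow> V \<in> D"
    unfolding D_def by blast
  have D5: "\<forall>U V. U \<in> D \<and> V \<in> D \<longrightarrow> U \<inter> V \<in> D"
  proof (intro allI impI)
    fix U V assume a: "U \<in> D \<and> V \<in> D"
    then obtain W1 where "W1 \<in> S" "W1 \<subseteq> U" unfolding D_def by blast
    obtain W2 where "W2 \<in> S" "W2 \<subseteq> V" using a unfolding D_def by blast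
    have "W1 \<inter> W2 \<in> S" using S4 \<open>W1 \<in> S\<close> \<open>W2 \<in> S\<close> by blast
    moreover have "W1 \<inter> W2 \<subseteq> U \<inter> V" using \<open>W1 \<subseteq> U\<close> \<open>W2 \<subseteq> V\<close> by blast
    moreover have "openin M (U \<inter> V)" using a D2 by blast
    ultimately show "U \<inter> V \<in> D" unfolding D_def by blast
  qed
  have D: "dual_ideal M D" unfolding dual_ideal_def using D1 D2 D3 D4 D5 by blast
  have SD: "S \<subseteq> D" unfolding D_def using S2 by blast
  define A where "A = {C. dual_ideal M C \<and> D \<subseteq> C}"
  have "\<forall>C\<in>chains A. \<exists>U\<in>A. \<forall>X\<in>C. X \<subseteq> U"
  proof
    fix C assume C: "C \<in> chains A"
    show "\<exists>U\<in>A. \<forall>X\<in>C. X \<subseteq> U"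
    proof (cases "C = {}")
      case True then show ?thesis using D A_def by blast
    next
      case False
      have CA: "C \<subseteq> A" and ch: "\<And>X Y. X \<in> C \<Longrightarrow> Y \<in> C \<Longrightarrow> X \<subseteq> Y \<or> Y \<subseteq> X"
        using C unfolding chains_def chain_subset_def by auto
      have di: "\<And>X. X \<in> C \<Longrightarrow> dual_ideal M X" using CA unfolding A_def by blast
      have E1: "\<Union>C \<noteq> {}"
      proof -
        obtain X where "X \<in> C" using False by blast
        then have "X \<noteq> {}" using di unfolding dual_ideal_def by blast
        then show ?thesis using \<open>X \<in> C\<close> by blast
      qed
      have E2: "\<forall>U\<in>\<Union>C. openin M U" using di unfolding dual_ideal_def by blast
      have E3: "{} \<notin> \<Union>C" using di unfolding dual_ideal_def by blast
      have E4: "\<forall>U V. U \<in> \<Union>C \<and> openin M V \<and> U \<subseteq> V \<longrightarrow> V \<in> \<Union>C"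
      proof (intro allI impI)
        fix U V assume a: "U \<in> \<Union>C \<and> openin M V \<and> U \<subseteq> V"
        then obtain X where "X \<in> C" "U \<in> X" by blast
        then have "V \<in> X" using di[OF \<open>X \<in> C\<close>] a unfolding dual_ideal_def by blast
        then show "V \<in> \<Union>C" using \<open>X \<in> C\<close> by blast
      qed
      have E5: "\<forall>U V. U \<in> \<Union>C \<and> V \<in> \<Union>C \<longrightarrow> U \<inter> V \<in> \<Union>C"
      proof (intro allI impI)
        fix U V assume "U \<in> \<Union>C \<and> V \<in> \<Union>C"
        then obtain X1 X2 where "X1 \<in> C" "X2 \<in> C" "U \<in> X1" "V \<in> X2" by blast
        show "U \<inter> V \<in> \<Union>C"
        proof (cases "X1 \<subseteq> X2")
          case True
          then have "U \<inter> V \<in> X2" using di[OF \<open>X2 \<in> C\<close>] \<open>U \<in> X1\<close> \<open>V \<in> X2\<close>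
            unfolding dual_ideal_def by blast
          then show ?thesis using \<open>X2 \<in> C\<close> by blast
        next
          case False
          then have "X2 \<subseteq> X1" using ch[OF \<open>X1 \<in> C\<close> \<open>X2 \<in> C\<close>] by blast
          then have "U \<inter> V \<in> X1" using di[OF \<open>X1 \<in> C\<close>] \<open>U \<in> X1\<close> \<open>V \<in> X2\<close>
            unfolding dual_ideal_def by blast
          then show ?thesis using \<open>X1 \<in> C\<close> by blast
        qed
      qed
      have "dual_ideal M (\<Union>C)" unfolding dual_ideal_def using E1 E2 E3 E4 E5 by blast
      moreover have "D \<subseteq> \<Union>C"
      proof -
        obtain X where "X \<in> C" using False by blast
        then have "D \<subseteq> X" using CA unfolding A_def by blast
        then show ?thesis using \<open>X \<in> C\<close> by blast
      qed
      ultimately show ?thesis unfolding A_def by blast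
    qed
  qed
  then obtain B where B: "B \<in> A" "\<forall>X\<in>A. B \<subseteq> X \<longrightarrow> X = B" by (rule Zorn_Lemma2[THEN bexE])
  have "quasipoint M B" unfolding quasipoint_def
  proof (intro conjI allI impI)
    show "dual_ideal M B" using B(1) unfolding A_def by blast
    fix C assume "dual_ideal M C \<and> B \<subseteq> C"
    moreover then have "C \<in> A" using B(1) unfolding A_def by blast
    ultimately show "C = B" using B(2) by blast
  qed
  moreover have "S \<subseteq> B" using SD B(1) unfolding A_def by blast
  ultimately show ?thesis by blast
qed

lemma qp_over_exists:
  assumes x: "x \<in> topspace M"
  shows "\<exists>B. quasipoint_over M B x \<and> (\<forall>V. openin M V \<and> x \<in> V \<longrightarrow> V \<in> B)"
proof -
  have "\<exists>B. quasipoint M B \<and> {V. openin M V \<and> x \<in> V} \<subseteq> B"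
  proof (rule qp_extend)
    show "{V. openin M V \<and> x \<in> V} \<noteq> {}" using x openin_topspace by blast
    show "\<forall>W\<in>{V. openin M V \<and> x \<in> V}. openin M W" by blast
    show "{} \<notin> {V. openin M V \<and> x \<in> V}" by blast
    show "\<forall>U V. U \<in> {V. openin M V \<and> x \<in> V} \<and> V \<in> {V. openin M V \<and> x \<in> V} \<longrightarrow>
      U \<inter> V \<in> {V. openin M V \<and> x \<in> V}" by blast
  qed
  then obtain B where B: "quasipoint M B" "{V. openin M V \<and> x \<in> V} \<subseteq> B" by blast
  have "\<forall>U\<in>B. x \<in> M closure_of U"
  proof
    fix U assume "U \<in> B"
    show "x \<in> M closure_of U" unfolding in_closure_of
    proof (intro conjI allI impI x)
      fix T assume "x \<in> T \<and> openin M T"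
      then have "T \<in> B" using B(2) by blast
      then have "U \<inter> T \<in> B" using qp_Int[OF B(1) \<open>U \<in> B\<close>] by blast
      then have "U \<inter> T \<noteq> {}" using qp_nonempty[OF B(1)] by blast
      then show "\<exists>y. y \<in> U \<and> y \<in> T" by blast
    qed
  qed
  then have "quasipoint_over M B x" using B(1) x unfolding quasipoint_over_def by blast
  then show ?thesis using B(2) by blast
qed

lemma compact_basic:
  assumes V1: "\<forall>U\<in>\<V>. openin M U" and V2: "\<forall>B. quasipoint M B \<longrightarrow> (\<exists>U\<in>\<V>. U \<in> B)"
  shows "\<exists>F. finite F \<and> F \<subseteq> \<V> \<and> (\<forall>B. quasipoint M B \<longrightarrow> (\<exists>U\<in>F. U \<in> B))"
proof (rule ccontr)
  assume "\<not> ?thesis"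
  then have nf: "\<And>F. finite F \<Longrightarrow> F \<subseteq> \<V> \<Longrightarrow> \<exists>B. quasipoint M B \<and> (\<forall>U\<in>F. U \<notin> B)"
    by auto
  define S where "S = {topspace M - M closure_of (\<Union>F) | F. finite F \<and> F \<subseteq> \<V>}"
  have S1: "S \<noteq> {}"
  proof -
    have "topspace M - M closure_of (\<Union>{}) \<in> S" unfolding S_def by blast
    then show ?thesis by blast
  qed
  have S2: "\<forall>W\<in>S. openin M W"
    unfolding S_def by (auto intro: openin_diff closedin_closure_of)
  have S3: "{} \<notin> S"
  proof
    assume "{} \<in> S"
    then obtain F where F: "finite F" "F \<subseteq> \<V>" "topspace M - M closure_of (\<Union>F) = {}"
      unfolding S_def by blast
    obtain B where B: "quasipoint M B" "\<forall>U\<in>F. U \<notin> B" using nf[OF F(1,2)] by blast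
    have Fo: "\<forall>U\<in>F. openin M U" using F(2) V1 by blast
    have nF: "\<Union>F \<notin> B"
    proof
      assume "\<Union>F \<in> B"
      then obtain U where "U \<in> F" "U \<in> B" using qp_prime[OF B(1) F(1) Fo] by blast
      then show False using B(2) by blast
    qed
    have oF: "openin M (\<Union>F)" using Fo by blast
    obtain V where V: "V \<in> B" "V \<inter> \<Union>F = {}" using qp_max[OF B(1) oF nF] by blast
    have Vo: "openin M V" using qp_open[OF B(1) V(1)] .
    then have "V \<inter> M closure_of (\<Union>F) = {}" using V(2) openin_Int_closure_of_eq_empty by blast
    moreover have "V \<subseteq> topspace M" using Vo openin_subset by blast
    moreover have "V \<noteq> {}" using qp_nonempty[OF B(1) V(1)] .
    ultimately show False using F(3) by blast
  qed
  have S4: "\<forall>U V. U \<in> S \<and> V \<in> S \<longrightarrow> U \<inter> V \<in> S"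
  proof (intro allI impI)
    fix U V assume "U \<in> S \<and> V \<in> S"
    then obtain F1 F2 where F: "finite F1" "F1 \<subseteq> \<V>" "U = topspace M - M closure_of (\<Union>F1)"
      "finite F2" "F2 \<subseteq> \<V>" "V = topspace M - M closure_of (\<Union>F2)"
      unfolding S_def by blast
    have "U \<inter> V = topspace M - M closure_of (\<Union>(F1 \<union> F2))"
      using F(3,6) by (simp add: Diff_Un Union_Un_distrib)
    moreover have "finite (F1 \<union> F2)" "F1 \<union> F2 \<subseteq> \<V>" using F by auto
    ultimately show "U \<inter> V \<in> S" unfolding S_def by blast
  qed
  obtain B where B: "quasipoint M B" "S \<subseteq> B" using qp_extend[OF S1 S2 S3 S4] by blast
  obtain U where U: "U \<in> \<V>" "U \<in> B" using V2 B(1) by blast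
  have "topspace M - M closure_of (\<Union>{U}) \<in> S" unfolding S_def using U(1) by blast
  then have "topspace M - M closure_of U \<in> B" using B(2) by auto
  then have "U \<inter> (topspace M - M closure_of U) \<in> B" using qp_Int[OF B(1) U(2)] by blast
  moreover have "U \<subseteq> M closure_of U"
    using closure_of_subset[OF openin_subset[of M U]] V1 U(1) by blast
  moreover have "U \<inter> (topspace M - M closure_of U) = {}" using \<open>U \<subseteq> M closure_of U\<close> by blast
  ultimately have "{} \<in> B" by simp
  then show False using qp_nonempty[OF B(1)] by blast
qed

lemma compact_Q: "compact_space (quasipoint_space M)"
  unfolding compact_space_def compactin_def
proof (intro conjI allI impI subset_refl)
  fix \<U> assume a: "(\<forall>T\<in>\<U>. openin (quasipoint_space M) T) \<and> topspace (quasipoint_space M) \<subseteq> \<Union>\<U>"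
  define \<V> where "\<V> = {U. openin M U \<and> (\<exists>T\<in>\<U>. {B. quasipoint M B \<and> U \<in> B} \<subseteq> T)}"
  have V1: "\<forall>U\<in>\<V>. openin M U" unfolding \<V>_def by blast
  have V2: "\<forall>B. quasipoint M B \<longrightarrow> (\<exists>U\<in>\<V>. U \<in> B)"
  proof (intro allI impI)
    fix B assume "quasipoint M B"
    then have "B \<in> topspace (quasipoint_space M)" by (simp add: topspace_Q)
    then have "B \<in> \<Union>\<U>" using a by blast
    then obtain T where "T \<in> \<U>" "B \<in> T" by blast
    then have "openin (quasipoint_space M) T" using a by blast
    then obtain U where "openin M U" "U \<in> B" "{B. quasipoint M B \<and> U \<in> B} \<subseteq> T"
      using openin_Q_nbhd \<open>B \<in> T\<close> by blast
    then show "\<exists>U\<in>\<V>. U \<in> B" unfolding \<V>_def using \<open>T \<in> \<U>\<close> by blast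
  qed
  obtain F where F: "finite F" "F \<subseteq> \<V>" "\<forall>B. quasipoint M B \<longrightarrow> (\<exists>U\<in>F. U \<in> B)"
    using compact_basic[OF V1 V2] by blast
  define t where "t U = (SOME T. T \<in> \<U> \<and> {B. quasipoint M B \<and> U \<in> B} \<subseteq> T)" for U
  have t: "t U \<in> \<U> \<and> {B. quasipoint M B \<and> U \<in> B} \<subseteq> t U" if "U \<in> F" for U
  proof -
    have "\<exists>T. T \<in> \<U> \<and> {B. quasipoint M B \<and> U \<in> B} \<subseteq> T" using that F(2) unfolding \<V>_def by blast
    then show ?thesis unfolding t_def by (rule someI_ex)
  qed
  show "\<exists>F. finite F \<and> F \<subseteq> \<U> \<and> topspace (quasipoint_space M) \<subseteq> \<Union>F"
  proof (intro exI conjI)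
    show "finite (t ` F)" using F(1) by blast
    show "t ` F \<subseteq> \<U>" using t by blast
    show "topspace (quasipoint_space M) \<subseteq> \<Union>(t ` F)"
    proof
      fix B assume "B \<in> topspace (quasipoint_space M)"
      then have q: "quasipoint M B" by (simp add: topspace_Q)
      then obtain U where "U \<in> F" "U \<in> B" using F(3) by blast
      then have "B \<in> t U" using t q by blast
      then show "B \<in> \<Union>(t ` F)" using \<open>U \<in> F\<close> by blast
    qed
  qed
qed

lemma cm_mult: "continuous_map X euclidean (f::_\<Rightarrow>complex) \<Longrightarrow> continuous_map X euclidean g
   \<Longrightarrow> continuous_map X euclidean (\<lambda>x. f x * g x)"
  by (simp add: continuous_map_atin tendsto_mult)

lemma cm_cnj: "continuous_map X euclidean (f::_\<Rightarrow>complex) \<Longrightarrow> continuous_map X euclidean (\<lambda>x. cnj (f x))"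
  by (simp add: continuous_map_atin tendsto_cnj)

lemma cm_inverse: "continuous_map X euclidean (f::_\<Rightarrow>complex) \<Longrightarrow> (\<And>x. x \<in> topspace X \<Longrightarrow> f x \<noteq> 0)
   \<Longrightarrow> continuous_map X euclidean (\<lambda>x. inverse (f x))"
  by (simp add: continuous_map_atin tendsto_inverse)

lemma cm_Re: "continuous_map X euclidean (f::_\<Rightarrow>complex) \<Longrightarrow> continuous_map X euclideanreal (\<lambda>x. Re (f x))"
  by (simp add: continuous_map_atin tendsto_Re)

lemma cm_Im: "continuous_map X euclidean (f::_\<Rightarrow>complex) \<Longrightarrow> continuous_map X euclideanreal (\<lambda>x. Im (f x))"
  by (simp add: continuous_map_atin tendsto_Im)

lemma cm_Complex: "continuous_map X euclideanreal f \<Longrightarrow> continuous_map X euclideanreal g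
   \<Longrightarrow> continuous_map X euclidean (\<lambda>x. Complex (f x) (g x))"
  by (simp add: continuous_map_atin tendsto_Complex)

lemma cm_of_real: "continuous_map X euclideanreal f \<Longrightarrow> continuous_map X euclidean (\<lambda>x. complex_of_real (f x))"
  by (simp add: continuous_map_atin tendsto_of_real)

definition one :: "'a topology \<Rightarrow> 'a set set \<Rightarrow> complex" where
  "one M B = (if quasipoint M B then 1 else 0)"

lemma CptI:
  assumes "continuous_map (quasipoint_space M) euclidean f"
    "\<And>B. \<not> quasipoint M B \<Longrightarrow> f B = 0"
    "\<And>x B1 B2. quasipoint_over M B1 x \<Longrightarrow> quasipoint_over M B2 x \<Longrightarrow> f B1 = f B2"
  shows "f \<in> Cpt M"
  unfolding Cpt_def topspace_Q using assms by blast

lemma CptD: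
  assumes "f \<in> Cpt M"
  shows "continuous_map (quasipoint_space M) euclidean f"
    "\<And>B. \<not> quasipoint M B \<Longrightarrow> f B = 0"
    "\<And>x B1 B2. quasipoint_over M B1 x \<Longrightarrow> quasipoint_over M B2 x \<Longrightarrow> f B1 = f B2"
  using assms unfolding Cpt_def topspace_Q by blast+

lemma Cpt_add: "f \<in> Cpt M \<Longrightarrow> g \<in> Cpt M \<Longrightarrow> (\<lambda>x. f x + g x) \<in> Cpt M"
  apply (rule CptI)
    apply (rule continuous_map_add; rule CptD(1); assumption)
   apply (simp add: CptD(2))
  apply (metis CptD(3))
  done

lemma Cpt_cmult: "f \<in> Cpt M \<Longrightarrow> (\<lambda>x. c * f x) \<in> Cpt M"
  apply (rule CptI)
    apply (rule cm_mult[OF continuous_map_const[THEN iffD2]])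
     apply simp
    apply (rule CptD(1); assumption)
   apply (simp add: CptD(2))
  apply (metis CptD(3))
  done

lemma Cpt_mult: "f \<in> Cpt M \<Longrightarrow> g \<in> Cpt M \<Longrightarrow> (\<lambda>x. f x * g x) \<in> Cpt M"
  apply (rule CptI)
    apply (rule cm_mult; rule CptD(1); assumption)
   apply (simp add: CptD(2))
  apply (metis CptD(3))
  done

lemma Cpt_cnj: "f \<in> Cpt M \<Longrightarrow> (\<lambda>x. cnj (f x)) \<in> Cpt M"
  apply (rule CptI)
    apply (rule cm_cnj; rule CptD(1); assumption)
   apply (simp add: CptD(2))
  apply (metis CptD(3))
  done

lemma Cpt_zero: "(\<lambda>x. 0) \<in> Cpt M"
  by (rule CptI) auto

lemma Cpt_one: "one M \<in> Cpt M"
proof (rule CptI)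
  show "continuous_map (quasipoint_space M) euclidean (one M)"
    by (rule continuous_map_eq[of _ _ "\<lambda>x. 1"]) (auto simp: one_def topspace_Q)
  show "\<And>B. \<not> quasipoint M B \<Longrightarrow> one M B = 0" by (simp add: one_def)
  show "\<And>x B1 B2. quasipoint_over M B1 x \<Longrightarrow> quasipoint_over M B2 x \<Longrightarrow> one M B1 = one M B2"
    by (simp add: one_def quasipoint_over_def)
qed

lemma Cpt_inverse:
  assumes "f \<in> Cpt M" "\<And>B. quasipoint M B \<Longrightarrow> f B \<noteq> 0"
  shows "(\<lambda>x. inverse (f x)) \<in> Cpt M"
  apply (rule CptI)
    apply (rule cm_inverse)
     apply (rule CptD(1)[OF assms(1)])
    apply (simp add: assms(2) topspace_Q)
   apply (simp add: CptD(2)[OF assms(1)])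
  apply (metis CptD(3)[OF assms(1)])
  done

lemma one_mult: "f \<in> Cpt M \<Longrightarrow> (\<lambda>x. f x * one M x) = f"
  by (rule ext) (simp add: one_def CptD(2))

lemma char_add: "character A \<phi> \<Longrightarrow> f \<in> A \<Longrightarrow> g \<in> A \<Longrightarrow> \<phi> (\<lambda>x. f x + g x) = \<phi> f + \<phi> g"
  unfolding character_def by blast

lemma char_cmult: "character A \<phi> \<Longrightarrow> f \<in> A \<Longrightarrow> \<phi> (\<lambda>x. c * f x) = c * \<phi> f"
  unfolding character_def by blast

lemma char_mult: "character A \<phi> \<Longrightarrow> f \<in> A \<Longrightarrow> g \<in> A \<Longrightarrow> \<phi> (\<lambda>x. f x * g x) = \<phi> f * \<phi> g"
  unfolding character_def by blast

lemma char_one: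
  assumes "character (Cpt M) \<phi>" shows "\<phi> (one M) = 1"
proof -
  obtain f where f: "f \<in> Cpt M" "\<phi> f \<noteq> 0" using assms unfolding character_def by blast
  have "\<phi> (\<lambda>x. f x * one M x) = \<phi> f * \<phi> (one M)"
    by (rule char_mult[OF assms f(1) Cpt_one])
  then have "\<phi> f = \<phi> f * \<phi> (one M)" using one_mult[OF f(1)] by simp
  then show ?thesis using f(2) by simp
qed

lemma char_zero:
  assumes "character (Cpt M) \<phi>" shows "\<phi> (\<lambda>x. 0) = 0"
proof -
  have "\<phi> (\<lambda>x. 0 * (\<lambda>x. 0) x) = 0 * \<phi> (\<lambda>x. 0)"
    by (rule char_cmult[OF assms Cpt_zero])
  then show ?thesis by simp
qed

lemma char_sum:
  assumes ch: "character (Cpt M) \<phi>" and "finite G"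
    and "\<forall>b\<in>G. p b \<in> Cpt M \<and> \<phi> (p b) = 0"
  shows "(\<lambda>x. \<Sum>b\<in>G. p b x) \<in> Cpt M \<and> \<phi> (\<lambda>x. \<Sum>b\<in>G. p b x) = 0"
  using assms(2,3)
proof (induction G rule: finite_induct)
  case empty
  then show ?case using Cpt_zero char_zero[OF ch] by simp
next
  case (insert a G)
  then have IH: "(\<lambda>x. \<Sum>b\<in>G. p b x) \<in> Cpt M" "\<phi> (\<lambda>x. \<Sum>b\<in>G. p b x) = 0" by auto
  have pa: "p a \<in> Cpt M" "\<phi> (p a) = 0" using insert.prems by auto
  have eq: "(\<lambda>x. \<Sum>b\<in>insert a G. p b x) = (\<lambda>x. p a x + (\<lambda>x. \<Sum>b\<in>G. p b x) x)"
    using insert.hyps by simp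
  have "\<phi> (\<lambda>x. p a x + (\<lambda>x. \<Sum>b\<in>G. p b x) x) = \<phi> (p a) + \<phi> (\<lambda>x. \<Sum>b\<in>G. p b x)"
    by (rule char_add[OF ch pa(1) IH(1)])
  then show ?case using eq Cpt_add[OF pa(1) IH(1)] pa(2) IH(2) by simp
qed

lemma gelfand_point:
  assumes ch: "character (Cpt M) \<phi>"
  shows "\<exists>B. quasipoint M B \<and> (\<forall>f\<in>Cpt M. \<phi> f = f B)"
proof (rule ccontr)
  assume "\<not> ?thesis"
  then have nb: "\<And>B. quasipoint M B \<Longrightarrow> \<exists>f\<in>Cpt M. \<phi> f \<noteq> f B" by blast
  have add: "\<And>f g. f \<in> Cpt M \<Longrightarrow> g \<in> Cpt M \<Longrightarrow> \<phi> (\<lambda>x. f x + g x) = \<phi> f + \<phi> g"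
    using ch unfolding character_def by blast
  have cm: "\<And>f c. f \<in> Cpt M \<Longrightarrow> \<phi> (\<lambda>x. c * f x) = c * \<phi> f"
    using ch unfolding character_def by blast
  have mul: "\<And>f g. f \<in> Cpt M \<Longrightarrow> g \<in> Cpt M \<Longrightarrow> \<phi> (\<lambda>x. f x * g x) = \<phi> f * \<phi> g"
    using ch unfolding character_def by blast
  have o1: "\<phi> (one M) = 1" using char_one[OF ch] .
  have gex: "\<exists>g. g \<in> Cpt M \<and> \<phi> g = 0 \<and> g B \<noteq> 0" if q: "quasipoint M B" for B
  proof -
    obtain f where f: "f \<in> Cpt M" "\<phi> f \<noteq> f B" using nb[OF q] by blast
    define g where "g = (\<lambda>x. f x + (\<lambda>x. (- \<phi> f) * one M x) x)"
    have c1: "(\<lambda>x. (- \<phi> f) * one M x) \<in> Cpt M" using Cpt_cmult[OF Cpt_one] .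
    have r1: "g \<in> Cpt M" unfolding g_def using Cpt_add[OF f(1) c1] .
    have e1: "\<phi> g = \<phi> f + \<phi> (\<lambda>x. (- \<phi> f) * one M x)" unfolding g_def by (rule add[OF f(1) c1])
    have e2: "\<phi> (\<lambda>x. (- \<phi> f) * one M x) = - \<phi> f" using cm[OF Cpt_one, of "- \<phi> f"] o1 by simp
    have r2: "\<phi> g = 0" using e1 e2 by simp
    have r3: "g B \<noteq> 0" unfolding g_def using f(2) q by (simp add: one_def)
    show ?thesis using r1 r2 r3 by blast
  qed
  define gg where "gg B = (SOME g. g \<in> Cpt M \<and> \<phi> g = 0 \<and> g B \<noteq> 0)" for B
  have gg: "gg B \<in> Cpt M \<and> \<phi> (gg B) = 0 \<and> gg B B \<noteq> 0" if "quasipoint M B" for B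
    unfolding gg_def using someI_ex[OF gex[OF that]] .
  define Nbh where "Nbh B = {C. C \<in> topspace (quasipoint_space M) \<and> gg B C \<noteq> 0}" for B
  have Oo: "openin (quasipoint_space M) (Nbh B)" if "quasipoint M B" for B
  proof -
    have "openin (quasipoint_space M) {C \<in> topspace (quasipoint_space M). gg B C \<in> - {0}}"
      using gg[OF that] CptD(1) by (intro openin_continuous_map_preimage) (auto simp: open_Compl)
    moreover have "{C \<in> topspace (quasipoint_space M). gg B C \<in> - {0}} = Nbh B" unfolding Nbh_def by auto
    ultimately show ?thesis by simp
  qed
  have "compactin (quasipoint_space M) (topspace (quasipoint_space M))"
    using compact_Q unfolding compact_space_def .
  moreover have "\<forall>T\<in>Nbh ` topspace (quasipoint_space M). openin (quasipoint_space M) T"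
    using Oo topspace_Q by auto
  moreover have "topspace (quasipoint_space M) \<subseteq> \<Union>(Nbh ` topspace (quasipoint_space M))"
  proof
    fix B assume B: "B \<in> topspace (quasipoint_space M)"
    then have "quasipoint M B" by (simp add: topspace_Q)
    then have "B \<in> Nbh B" unfolding Nbh_def using gg B by auto
    then show "B \<in> \<Union>(Nbh ` topspace (quasipoint_space M))" using B by blast
  qed
  ultimately obtain F where F: "finite F" "F \<subseteq> Nbh ` topspace (quasipoint_space M)"
    "topspace (quasipoint_space M) \<subseteq> \<Union>F"
    unfolding compactin_def by meson
  then obtain G where G: "G \<subseteq> topspace (quasipoint_space M)" "finite G" "F = Nbh ` G"
    using finite_subset_image by metis
  have Gq: "\<And>b. b \<in> G \<Longrightarrow> quasipoint M b" using G(1) topspace_Q by blast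
  define p where "p b = (\<lambda>x. gg b x * (\<lambda>x. cnj (gg b x)) x)" for b
  have p: "\<forall>b\<in>G. p b \<in> Cpt M \<and> \<phi> (p b) = 0"
  proof
    fix b assume "b \<in> G"
    then have g: "gg b \<in> Cpt M" "\<phi> (gg b) = 0" using gg Gq by auto
    show "p b \<in> Cpt M \<and> \<phi> (p b) = 0" unfolding p_def
      using Cpt_mult[OF g(1) Cpt_cnj[OF g(1)]] mul[OF g(1) Cpt_cnj[OF g(1)]] g(2) by simp
  qed
  define s where "s = (\<lambda>x. \<Sum>b\<in>G. p b x)"
  have s: "s \<in> Cpt M" "\<phi> s = 0" using char_sum[OF ch G(2) p] unfolding s_def by auto
  have pr: "p b x = complex_of_real ((cmod (gg b x))\<^sup>2)" for b x
    unfolding p_def by (metis complex_norm_square of_real_power)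
  have snz: "s B \<noteq> 0" if "quasipoint M B" for B
  proof -
    have "B \<in> \<Union>F" using F(3) that topspace_Q by blast
    then obtain b where b: "b \<in> G" "B \<in> Nbh b" using G(3) by blast
    then have "gg b B \<noteq> 0" unfolding Nbh_def by blast
    then have pos: "(cmod (gg b B))\<^sup>2 > 0" by simp
    have "s B = complex_of_real (\<Sum>b\<in>G. (cmod (gg b B))\<^sup>2)" unfolding s_def pr by simp
    moreover have "(\<Sum>b\<in>G. (cmod (gg b B))\<^sup>2) > 0"
      using sum_pos2[OF G(2) b(1), of "\<lambda>b. (cmod (gg b B))\<^sup>2"] pos by simp
    ultimately show ?thesis by (metis of_real_eq_0_iff order_less_irrefl)
  qed
  define t where "t = (\<lambda>x. inverse (s x))"
  have t: "t \<in> Cpt M" unfolding t_def using Cpt_inverse[OF s(1) snz] .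
  have "(\<lambda>x. s x * t x) = one M"
  proof
    fix x show "s x * t x = one M x"
    proof (cases "quasipoint M x")
      case True then show ?thesis using snz[OF True] by (simp add: t_def one_def)
    next
      case False then show ?thesis using CptD(2)[OF s(1) False] by (simp add: t_def one_def)
    qed
  qed
  then have "\<phi> (one M) = \<phi> s * \<phi> t" using mul[OF s(1) t] by simp
  then show False using s(2) o1 by simp
qed

lemma qp_Inter:
  assumes q: "quasipoint M B" and "finite G" "G \<noteq> {}" "G \<subseteq> B"
  shows "\<Inter>G \<in> B"
  using assms(2-)
proof (induction G rule: finite_ne_induct)
  case (singleton x) then show ?case by simp
next
  case (insert x F)
  then have "x \<in> B" "\<Inter>F \<in> B" by auto
  then show ?case using qp_Int[OF q] by simp
qed

locale SCL =
  fixes M :: "'a topology" and Y :: "'b topology" and e :: "'a \<Rightarrow> 'b"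
  assumes sc: "stone_cech M Y e"
begin

lemma compY: "compact_space Y" using sc unfolding stone_cech_def by blast
lemma hausY: "Hausdorff_space Y" using sc unfolding stone_cech_def by blast
lemma emb: "embedding_map M Y e" using sc unfolding stone_cech_def by blast
lemma dense: "Y closure_of (e ` topspace M) = topspace Y" using sc unfolding stone_cech_def by blast
lemma ext: "continuous_map M euclideanreal f \<Longrightarrow> bounded (f ` topspace M) \<Longrightarrow>
        \<exists>g. continuous_map Y euclideanreal g \<and> (\<forall>x\<in>topspace M. g (e x) = f x)"
  using sc unfolding stone_cech_def by blast

lemma contE: "continuous_map M Y e"
proof -
  have "continuous_map M (subtopology Y (e ` topspace M)) e"
    using emb unfolding embedding_map_def by (rule homeomorphic_imp_continuous_map)
  then show ?thesis by (simp add: continuous_map_in_subtopology)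
qed

lemma eM: "e x \<in> topspace Y" if "x \<in> topspace M"
  using continuous_map_image_subset_topspace[OF contE] that by blast

definition pr :: "'a set \<Rightarrow> 'b set" where "pr U = Y closure_of (e ` U)"

lemma key:
  assumes q: "quasipoint M B" and y: "\<forall>U\<in>B. y \<in> pr U" and V: "openin Y V" "y \<in> V"
  shows "{x \<in> topspace M. e x \<in> V} \<in> B"
proof (rule ccontr)
  assume nB: "{x \<in> topspace M. e x \<in> V} \<notin> B"
  have "openin M {x \<in> topspace M. e x \<in> V}" using contE V(1) by (rule openin_continuous_map_preimage)
  then obtain U where U: "U \<in> B" "U \<inter> {x \<in> topspace M. e x \<in> V} = {}" using qp_max[OF q _ nB] by blast
  have "U \<subseteq> topspace M" using qp_open[OF q U(1)] openin_subset by blast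
  then have "V \<inter> e ` U = {}" using U(2) by blast
  then have "V \<inter> Y closure_of (e ` U) = {}" using openin_Int_closure_of_eq_empty[OF V(1)] by blast
  moreover have "y \<in> Y closure_of (e ` U)" using y U(1) unfolding pr_def by blast
  ultimately show False using V(2) by blast
qed

lemma pi_ex:
  assumes q: "quasipoint M B"
  shows "\<exists>y. y \<in> topspace Y \<and> (\<forall>U\<in>B. y \<in> pr U)"
proof -
  define \<U> where "\<U> = pr ` B"
  have c: "\<forall>C\<in>\<U>. closedin Y C" unfolding \<U>_def pr_def by (simp add: closedin_closure_of)
  have fip: "\<forall>\<F>. finite \<F> \<and> \<F> \<subseteq> \<U> \<longrightarrow> \<Inter>\<F> \<noteq> {}"
  proof (intro allI impI)
    fix \<F> assume a: "finite \<F> \<and> \<F> \<subseteq> \<U>"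
    then obtain G where G: "G \<subseteq> B" "finite G" "\<F> = pr ` G" unfolding \<U>_def
      using finite_subset_image by metis
    show "\<Inter>\<F> \<noteq> {}"
    proof (cases "G = {}")
      case True then show ?thesis using G by simp
    next
      case False
      have "\<Inter>G \<in> B" using qp_Inter[OF q G(2) False G(1)] .
      then obtain x where x: "x \<in> \<Inter>G" using qp_nonempty[OF q] by blast
      have "e x \<in> pr U" if "U \<in> G" for U
      proof -
        have "U \<subseteq> topspace M" using qp_open[OF q] G(1) that openin_subset by blast
        then have "e ` U \<subseteq> topspace Y" using eM by blast
        then have "e ` U \<subseteq> pr U" unfolding pr_def by (rule closure_of_subset)
        then show ?thesis using x that by blast
      qed
      then show ?thesis using G(3) by blast
    qed
  qed
  have "\<Inter>\<U> \<noteq> {}" using compY unfolding compact_space_fip using c fip by blast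
  then obtain y where y: "y \<in> \<Inter>\<U>" by blast
  have "\<U> \<noteq> {}" unfolding \<U>_def using qp_top[OF q] by blast
  then obtain C where "C \<in> \<U>" by blast
  then have "y \<in> topspace Y" using y c closedin_subset by blast
  then show ?thesis using y unfolding \<U>_def by blast
qed

lemma pi_uniq:
  assumes q: "quasipoint M B" and y1: "y1 \<in> topspace Y" "\<forall>U\<in>B. y1 \<in> pr U"
    and y2: "y2 \<in> topspace Y" "\<forall>U\<in>B. y2 \<in> pr U"
  shows "y1 = y2"
proof (rule ccontr)
  assume "y1 \<noteq> y2"
  then obtain V1 V2 where V: "openin Y V1" "openin Y V2" "y1 \<in> V1" "y2 \<in> V2" "disjnt V1 V2"
    using hausY y1(1) y2(1) unfolding Hausdorff_space_def by blast
  have "{x \<in> topspace M. e x \<in> V1} \<in> B" using key[OF q y1(2) V(1) V(3)] .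
  moreover have "{x \<in> topspace M. e x \<in> V2} \<in> B" using key[OF q y2(2) V(2) V(4)] .
  ultimately have "{x \<in> topspace M. e x \<in> V1} \<inter> {x \<in> topspace M. e x \<in> V2} \<in> B" using qp_Int[OF q] by blast
  moreover have "{x \<in> topspace M. e x \<in> V1} \<inter> {x \<in> topspace M. e x \<in> V2} = {}"
    using V(5) unfolding disjnt_def by blast
  ultimately show False using qp_nonempty[OF q] by metis
qed

definition pi :: "'a set set \<Rightarrow> 'b" where
  "pi B = (THE y. y \<in> topspace Y \<and> (\<forall>U\<in>B. y \<in> pr U))"

lemma pi_prop:
  assumes q: "quasipoint M B"
  shows "pi B \<in> topspace Y" "\<forall>U\<in>B. pi B \<in> pr U"
proof -
  obtain y where y: "y \<in> topspace Y" "\<forall>U\<in>B. y \<in> pr U" using pi_ex[OF q] by blast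
  have "pi B = y" unfolding pi_def
  proof (rule the_equality)
    show "y \<in> topspace Y \<and> (\<forall>U\<in>B. y \<in> pr U)" using y by blast
    fix z assume "z \<in> topspace Y \<and> (\<forall>U\<in>B. z \<in> pr U)"
    then show "z = y" using pi_uniq[OF q] y by blast
  qed
  then show "pi B \<in> topspace Y" "\<forall>U\<in>B. pi B \<in> pr U" using y by auto
qed

lemma pi_eqI:
  assumes q: "quasipoint M B" and "y \<in> topspace Y" "\<forall>U\<in>B. y \<in> pr U"
  shows "pi B = y"
  using pi_uniq[OF q pi_prop[OF q] assms(2,3)] .

lemma pi_over:
  assumes o: "quasipoint_over M B x"
  shows "pi B = e x"
proof -
  have q: "quasipoint M B" and x: "x \<in> topspace M" and c: "\<forall>U\<in>B. x \<in> M closure_of U"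
    using o unfolding quasipoint_over_def by auto
  have "\<forall>U\<in>B. e x \<in> pr U"
  proof
    fix U assume "U \<in> B"
    then have "e x \<in> e ` (M closure_of U)" using c by blast
    then show "e x \<in> pr U" unfolding pr_def using continuous_map_image_closure_subset[OF contE] by blast
  qed
  then show ?thesis using pi_eqI[OF q eM[OF x]] by blast
qed

lemma pi_cont: "continuous_map (quasipoint_space M) Y pi"
  unfolding continuous_map
proof (intro conjI allI impI)
  show "pi ` topspace (quasipoint_space M) \<subseteq> topspace Y" using pi_prop(1) by (auto simp: topspace_Q)
  fix V assume V: "openin Y V"
  show "openin (quasipoint_space M) {B \<in> topspace (quasipoint_space M). pi B \<in> V}"
  proof (rule openin_Q_criterion)
    fix B assume "B \<in> {B \<in> topspace (quasipoint_space M). pi B \<in> V}"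
    then have q: "quasipoint M B" and pv: "pi B \<in> V" by (auto simp: topspace_Q)
    have "regular_space Y" using compY hausY by (rule compact_Hausdorff_imp_regular_space)
    moreover have "closedin Y (topspace Y - V)" using V by blast
    moreover have "pi B \<in> topspace Y - (topspace Y - V)" using pv pi_prop(1)[OF q] by blast
    ultimately obtain W where W: "openin Y W" "pi B \<in> W" "disjnt (topspace Y - V) (Y closure_of W)"
      unfolding regular_space by blast
    have clW: "Y closure_of W \<subseteq> V"
    proof
      fix z assume z: "z \<in> Y closure_of W"
      then have "z \<in> topspace Y" by (rule subsetD[OF closure_of_subset_topspace])
      then show "z \<in> V" using z W(3) unfolding disjnt_def by blast
    qed
    define U where "U = {x \<in> topspace M. e x \<in> W}"
    have U: "U \<in> B" unfolding U_def using key[OF q pi_prop(2)[OF q] W(1,2)] .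
    have Uo: "openin M U" using qp_open[OF q U] .
    have "{B. quasipoint M B \<and> U \<in> B} \<subseteq> {B \<in> topspace (quasipoint_space M). pi B \<in> V}"
    proof
      fix B' assume "B' \<in> {B. quasipoint M B \<and> U \<in> B}"
      then have q': "quasipoint M B'" "U \<in> B'" by auto
      have "pi B' \<in> pr U" using pi_prop(2)[OF q'(1)] q'(2) by blast
      moreover have "pr U \<subseteq> Y closure_of W" unfolding pr_def U_def by (rule closure_of_mono) blast
      ultimately have "pi B' \<in> V" using clW by blast
      then show "B' \<in> {B \<in> topspace (quasipoint_space M). pi B \<in> V}" using q'(1) by (simp add: topspace_Q)
    qed
    then show "\<exists>U. openin M U \<and> U \<in> B \<and> {B. quasipoint M B \<and> U \<in> B} \<subseteq> {B \<in> topspace (quasipoint_space M). pi B \<in> V}"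
      using Uo U by blast
  next
    fix B assume "B \<in> {B \<in> topspace (quasipoint_space M). pi B \<in> V}"
    then show "quasipoint M B" by (simp add: topspace_Q)
  qed
qed

lemma pi_surj: "pi ` topspace (quasipoint_space M) = topspace Y"
proof
  show "pi ` topspace (quasipoint_space M) \<subseteq> topspace Y" using pi_cont continuous_map_image_subset_topspace by blast
  have "compactin Y (pi ` topspace (quasipoint_space M))"
    using image_compactin[OF compact_Q[unfolded compact_space_def] pi_cont] .
  then have cl: "closedin Y (pi ` topspace (quasipoint_space M))" using compactin_imp_closedin[OF hausY] by blast
  have "e ` topspace M \<subseteq> pi ` topspace (quasipoint_space M)"
  proof
    fix y assume "y \<in> e ` topspace M"
    then obtain x where x: "x \<in> topspace M" "y = e x" by blast
    obtain B where "quasipoint_over M B x" using qp_over_exists[OF x(1)] by blast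
    then have "pi B = y" "quasipoint M B" using pi_over x(2) unfolding quasipoint_over_def by auto
    then show "y \<in> pi ` topspace (quasipoint_space M)" by (auto simp: topspace_Q)
  qed
  then have "Y closure_of (e ` topspace M) \<subseteq> pi ` topspace (quasipoint_space M)"
    using cl by (rule closure_of_minimal)
  then show "topspace Y \<subseteq> pi ` topspace (quasipoint_space M)" using dense by simp
qed

end

lemma bounded_Re: "bounded (g ` S) \<Longrightarrow> bounded ((\<lambda>x. Re (g x)) ` S)"
  unfolding bounded_iff using abs_Re_le_cmod by (smt (verit) image_iff real_norm_def)

lemma bounded_Im: "bounded (g ` S) \<Longrightarrow> bounded ((\<lambda>x. Im (g x)) ` S)"
  unfolding bounded_iff using abs_Im_le_cmod by (smt (verit) image_iff real_norm_def)

context SCL begin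

definition hh :: "('a set set \<Rightarrow> complex) \<Rightarrow> 'a \<Rightarrow> complex" where
  "hh f x = f (SOME B. quasipoint_over M B x)"

lemma h_prop:
  assumes f: "f \<in> Cpt M" and o: "quasipoint_over M B x"
  shows "hh f x = f B"
proof -
  have "\<exists>B. quasipoint_over M B x" using o by blast
  then have "quasipoint_over M (SOME B. quasipoint_over M B x) x" by (rule someI_ex)
  then show ?thesis unfolding hh_def using CptD(3)[OF f _ o] by blast
qed

lemma near:
  assumes f: "f \<in> Cpt M" and x: "x \<in> topspace M" and ep: "\<epsilon> > 0"
  shows "\<exists>W. openin M W \<and> x \<in> W \<and> (\<forall>x'\<in>W. dist (hh f x') (hh f x) < \<epsilon>)"
proof -
  define c where "c = hh f x"
  define C where "C = {B \<in> topspace (quasipoint_space M). f B \<in> - ball c \<epsilon>}"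
  have "closedin (quasipoint_space M) C" unfolding C_def
    using CptD(1)[OF f] by (rule closedin_continuous_map_preimage) (metis closed_closedin closed_Compl open_ball)
  then have cC: "compactin (quasipoint_space M) C" using compact_Q by (metis closedin_compact_space)
  have ex: "\<exists>UT. fst UT \<in> B \<and> openin M (snd UT) \<and> x \<in> snd UT \<and> fst UT \<inter> snd UT = {}" if "B \<in> C" for B
  proof -
    have q: "quasipoint M B" using that unfolding C_def by (simp add: topspace_Q)
    have "f B \<notin> ball c \<epsilon>" using that unfolding C_def by blast
    then have "\<not> quasipoint_over M B x" using h_prop[OF f] ep unfolding c_def by fastforce
    then obtain U where U: "U \<in> B" "x \<notin> M closure_of U" using q x unfolding quasipoint_over_def by blast
    then obtain T where "x \<in> T" "openin M T" "\<not> (\<exists>y. y \<in> U \<and> y \<in> T)"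
      using x unfolding in_closure_of by blast
    then show ?thesis using U by (intro exI[of _ "(U, T)"]) auto
  qed
  then have "\<forall>B\<in>C. \<exists>UT. fst UT \<in> B \<and> openin M (snd UT) \<and> x \<in> snd UT \<and> fst UT \<inter> snd UT = {}"
    by blast
  then have "\<exists>ch. \<forall>B\<in>C. fst (ch B) \<in> B \<and> openin M (snd (ch B)) \<and> x \<in> snd (ch B) \<and> fst (ch B) \<inter> snd (ch B) = {}"
    by (rule bchoice)
  then obtain ch where ch: "\<forall>B\<in>C. fst (ch B) \<in> B \<and> openin M (snd (ch B)) \<and> x \<in> snd (ch B) \<and> fst (ch B) \<inter> snd (ch B) = {}"
    by blast
  define bas where "bas B = {B'. quasipoint M B' \<and> fst (ch B) \<in> B'}" for B
  have "\<forall>T\<in>bas ` C. openin (quasipoint_space M) T"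
  proof
    fix T assume "T \<in> bas ` C"
    then obtain B where B: "B \<in> C" "T = bas B" by blast
    have "quasipoint M B" using B(1) unfolding C_def by (simp add: topspace_Q)
    then have "openin M (fst (ch B))" using qp_open ch B(1) by blast
    then show "openin (quasipoint_space M) T" unfolding B(2) bas_def by (rule openin_Q_basic)
  qed
  moreover have "C \<subseteq> \<Union>(bas ` C)"
  proof
    fix B assume B: "B \<in> C"
    then have "quasipoint M B" unfolding C_def by (simp add: topspace_Q)
    then have "B \<in> bas B" unfolding bas_def using ch B by blast
    then show "B \<in> \<Union>(bas ` C)" using B by blast
  qed
  ultimately obtain F where F: "finite F" "F \<subseteq> bas ` C" "C \<subseteq> \<Union>F"
    using cC unfolding compactin_def by meson
  then obtain G where G: "G \<subseteq> C" "finite G" "F = bas ` G" using finite_subset_image by metis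
  define W where "W = topspace M \<inter> \<Inter>((\<lambda>B. snd (ch B)) ` G)"
  have Wo: "openin M W" unfolding W_def
    by (rule openin_Int_Inter) (use G ch in auto)
  have xW: "x \<in> W" unfolding W_def using x G ch by blast
  have "dist (hh f x') c < \<epsilon>" if x': "x' \<in> W" for x'
  proof -
    have x'M: "x' \<in> topspace M" using x' unfolding W_def by blast
    obtain B' where B': "quasipoint_over M B' x'" using qp_over_exists[OF x'M] by blast
    have q': "quasipoint M B'" using B' unfolding quasipoint_over_def by blast
    have "B' \<notin> C"
    proof
      assume "B' \<in> C"
      then have "B' \<in> \<Union>F" using F(3) by blast
      then obtain b where b: "b \<in> G" "B' \<in> bas b" using G(3) by blast
      then have u: "fst (ch b) \<in> B'" unfolding bas_def by blast
      then have "x' \<in> M closure_of (fst (ch b))" using B' unfolding quasipoint_over_def by blast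
      moreover have "x' \<in> snd (ch b)" using x' b(1) unfolding W_def by blast
      moreover have "openin M (snd (ch b))" "fst (ch b) \<inter> snd (ch b) = {}" using ch b(1) G(1) by auto
      ultimately show False unfolding in_closure_of by blast
    qed
    then have "f B' \<in> ball c \<epsilon>" unfolding C_def using q' by (simp add: topspace_Q)
    then show ?thesis using h_prop[OF f B'] by (simp add: dist_commute)
  qed
  then show ?thesis using Wo xW unfolding c_def by blast
qed

lemma h_cont:
  assumes f: "f \<in> Cpt M"
  shows "continuous_map M euclidean (hh f)"
  unfolding continuous_map
proof (intro conjI allI impI)
  show "hh f ` topspace M \<subseteq> topspace euclidean" by simp
  fix T :: "complex set" assume "openin euclidean T"
  then have T: "open T" by (metis open_openin)
  show "openin M {x \<in> topspace M. hh f x \<in> T}"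
  proof (subst openin_subopen, intro ballI)
    fix x assume "x \<in> {x \<in> topspace M. hh f x \<in> T}"
    then have x: "x \<in> topspace M" "hh f x \<in> T" by auto
    obtain \<epsilon> where ep: "\<epsilon> > 0" "ball (hh f x) \<epsilon> \<subseteq> T" using T x(2) open_contains_ball by blast
    obtain W where W: "openin M W" "x \<in> W" "\<forall>x'\<in>W. dist (hh f x') (hh f x) < \<epsilon>"
      using near[OF f x(1) ep(1)] by blast
    have "W \<subseteq> {x \<in> topspace M. hh f x \<in> T}"
    proof
      fix x' assume "x' \<in> W"
      then have "x' \<in> topspace M" "hh f x' \<in> ball (hh f x) \<epsilon>"
        using W openin_subset by (auto simp: dist_commute)
      then show "x' \<in> {x \<in> topspace M. hh f x \<in> T}" using ep(2) by blast
    qed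
    then show "\<exists>T'. openin M T' \<and> x \<in> T' \<and> T' \<subseteq> {x \<in> topspace M. hh f x \<in> T}" using W by blast
  qed
qed

lemma h_bounded:
  assumes f: "f \<in> Cpt M"
  shows "bounded (hh f ` topspace M)"
proof -
  have "compactin euclidean (f ` topspace (quasipoint_space M))"
    using image_compactin[OF compact_Q[unfolded compact_space_def] CptD(1)[OF f]] .
  then have "bounded (f ` topspace (quasipoint_space M))" by (simp add: compact_imp_bounded)
  moreover have "hh f ` topspace M \<subseteq> f ` topspace (quasipoint_space M)"
  proof
    fix z assume "z \<in> hh f ` topspace M"
    then obtain x where x: "x \<in> topspace M" "z = hh f x" by blast
    obtain B where B: "quasipoint_over M B x" using qp_over_exists[OF x(1)] by blast
    then have "z = f B" "B \<in> topspace (quasipoint_space M)"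
      using h_prop[OF f B] x(2) by (auto simp: topspace_Q quasipoint_over_def)
    then show "z \<in> f ` topspace (quasipoint_space M)" by blast
  qed
  ultimately show ?thesis by (rule bounded_subset)
qed

lemma fG:
  assumes f: "f \<in> Cpt M"
  shows "\<exists>G. continuous_map Y euclidean G \<and> (\<forall>B. quasipoint M B \<longrightarrow> f B = G (pi B))"
proof -
  obtain gr where gr: "continuous_map Y euclideanreal gr" "\<forall>x\<in>topspace M. gr (e x) = Re (hh f x)"
    using ext[OF cm_Re[OF h_cont[OF f]] bounded_Re[OF h_bounded[OF f]]] by blast
  obtain gi where gi: "continuous_map Y euclideanreal gi" "\<forall>x\<in>topspace M. gi (e x) = Im (hh f x)"
    using ext[OF cm_Im[OF h_cont[OF f]] bounded_Im[OF h_bounded[OF f]]] by blast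
  define G where "G y = Complex (gr y) (gi y)" for y
  have Gc: "continuous_map Y euclidean G" unfolding G_def using cm_Complex[OF gr(1) gi(1)] .
  have Ge: "G (e x) = hh f x" if "x \<in> topspace M" for x
    unfolding G_def using gr(2) gi(2) that by (simp add: complex_eq_iff)
  have "f B = G (pi B)" if q: "quasipoint M B" for B
  proof (rule ccontr)
    assume ne: "f B \<noteq> G (pi B)"
    define D where "D = {B \<in> topspace (quasipoint_space M). f B - G (pi B) \<in> - {0}}"
    have "continuous_map (quasipoint_space M) euclidean (\<lambda>B. G (pi B))"
      using continuous_map_compose[OF pi_cont Gc] by (simp add: o_def)
    then have "continuous_map (quasipoint_space M) euclidean (\<lambda>B. f B - G (pi B))"
      using CptD(1)[OF f] by (intro continuous_map_diff)
    then have "openin (quasipoint_space M) D" unfolding D_def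
      by (rule openin_continuous_map_preimage) (simp add: open_Compl)
    moreover have "B \<in> D" unfolding D_def using q ne by (simp add: topspace_Q)
    ultimately obtain U where U: "openin M U" "U \<in> B" "{B. quasipoint M B \<and> U \<in> B} \<subseteq> D"
      using openin_Q_nbhd by blast
    obtain x where x: "x \<in> U" using qp_nonempty[OF q U(2)] by blast
    have xM: "x \<in> topspace M" using x U(1) openin_subset by blast
    obtain B' where B': "quasipoint_over M B' x" "\<forall>V. openin M V \<and> x \<in> V \<longrightarrow> V \<in> B'"
      using qp_over_exists[OF xM] by blast
    have q': "quasipoint M B'" using B'(1) unfolding quasipoint_over_def by blast
    have "U \<in> B'" using B'(2) U(1) x by blast
    then have "B' \<in> D" using U(3) q' by blast
    then have "f B' \<noteq> G (pi B')" unfolding D_def by simp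
    moreover have "G (pi B') = f B'" using pi_over[OF B'(1)] Ge[OF xM] h_prop[OF f B'(1)] by simp
    ultimately show False by simp
  qed
  then show ?thesis using Gc by blast
qed

lemma fiber:
  assumes f: "f \<in> Cpt M" and "quasipoint M B1" "quasipoint M B2" "pi B1 = pi B2"
  shows "f B1 = f B2"
  using fG[OF f] assms by metis

end

context SCL begin

definition sel :: "'b \<Rightarrow> 'a set set" where
  "sel y = (SOME B. quasipoint M B \<and> pi B = y)"

lemma sel: assumes "y \<in> topspace Y" shows "quasipoint M (sel y)" "pi (sel y) = y"
proof -
  obtain B where "B \<in> topspace (quasipoint_space M)" "pi B = y" using pi_surj assms by (metis imageE)
  then have "\<exists>B. quasipoint M B \<and> pi B = y" by (auto simp: topspace_Q)
  then have "quasipoint M (sel y) \<and> pi (sel y) = y" unfolding sel_def by (rule someI_ex)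
  then show "quasipoint M (sel y)" "pi (sel y) = y" by auto
qed

definition Phi :: "'b \<Rightarrow> ('a set set \<Rightarrow> complex) \<Rightarrow> complex" where
  "Phi y = restrict (\<lambda>f. f (sel y)) (Cpt M)"

lemma Phi_char: assumes y: "y \<in> topspace Y" shows "character (Cpt M) (Phi y)"
  unfolding character_def
proof (intro conjI ballI allI)
  show "Phi y \<in> extensional (Cpt M)" unfolding Phi_def by (rule restrict_extensional)
  fix f assume f: "f \<in> Cpt M"
  {
    fix g assume g: "g \<in> Cpt M"
    show "Phi y (\<lambda>x. f x + g x) = Phi y f + Phi y g"
      unfolding Phi_def using Cpt_add[OF f g] f g by simp
    show "Phi y (\<lambda>x. f x * g x) = Phi y f * Phi y g"
      unfolding Phi_def using Cpt_mult[OF f g] f g by simp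
  }
  fix c show "Phi y (\<lambda>x. c * f x) = c * Phi y f"
    unfolding Phi_def using Cpt_cmult[OF f] f by simp
next
  have "Phi y (one M) = 1" unfolding Phi_def using Cpt_one[of M] sel(1)[OF y] by (simp add: one_def)
  then show "\<exists>f\<in>Cpt M. Phi y f \<noteq> 0" using Cpt_one[of M] by force
qed

lemma coord_cont:
  assumes f: "f \<in> Cpt M"
  shows "continuous_map Y euclidean (\<lambda>y. f (sel y))"
  unfolding continuous_map_closedin
proof (intro conjI allI impI)
  show "(\<lambda>y. f (sel y)) \<in> topspace Y \<rightarrow> topspace euclidean" by simp
next
  fix C :: "complex set" assume C: "closedin euclidean C"
  have cm: "closed_map (quasipoint_space M) Y pi"
    using continuous_imp_closed_map[OF pi_cont compact_Q hausY] .
  have cl: "closedin (quasipoint_space M) {B \<in> topspace (quasipoint_space M). f B \<in> C}"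
    using closedin_continuous_map_preimage[OF CptD(1)[OF f] C] .
  have eq: "{y \<in> topspace Y. f (sel y) \<in> C} = pi ` {B \<in> topspace (quasipoint_space M). f B \<in> C}"
  proof
    show "{y \<in> topspace Y. f (sel y) \<in> C} \<subseteq> pi ` {B \<in> topspace (quasipoint_space M). f B \<in> C}"
    proof
      fix y assume "y \<in> {y \<in> topspace Y. f (sel y) \<in> C}"
      then have y: "y \<in> topspace Y" "f (sel y) \<in> C" by auto
      have "sel y \<in> {B \<in> topspace (quasipoint_space M). f B \<in> C}" using sel(1)[OF y(1)] y(2) by (simp add: topspace_Q)
      then have "pi (sel y) \<in> pi ` {B \<in> topspace (quasipoint_space M). f B \<in> C}" by (rule imageI)
      then show "y \<in> pi ` {B \<in> topspace (quasipoint_space M). f B \<in> C}" unfolding sel(2)[OF y(1)] .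
    qed
    show "pi ` {B \<in> topspace (quasipoint_space M). f B \<in> C} \<subseteq> {y \<in> topspace Y. f (sel y) \<in> C}"
    proof
      fix y assume "y \<in> pi ` {B \<in> topspace (quasipoint_space M). f B \<in> C}"
      then obtain B where B: "quasipoint M B" "f B \<in> C" "y = pi B" by (auto simp: topspace_Q)
      have y: "y \<in> topspace Y" using pi_prop(1)[OF B(1)] B(3) by simp
      have "f (sel y) = f B" using fiber[OF f sel(1)[OF y] B(1)] sel(2)[OF y] B(3) by simp
      then show "y \<in> {y \<in> topspace Y. f (sel y) \<in> C}" using y B(2) by simp
    qed
  qed
  show "closedin Y {y \<in> topspace Y. f (sel y) \<in> C}"
    unfolding eq using cm cl unfolding closed_map_def by blast
qed

lemma haus_gelfand: "Hausdorff_space (gelfand_spectrum A)"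
  unfolding gelfand_spectrum_def
  by (intro Hausdorff_space_subtopology) (simp add: Hausdorff_space_product_topology)

lemma topspace_gelfand: "topspace (gelfand_spectrum A) = (PiE A (\<lambda>_. UNIV)) \<inter> {\<phi>. character A \<phi>}"
  unfolding gelfand_spectrum_def by (simp add: topspace_product_topology)

lemma Phi_cont: "continuous_map Y (gelfand_spectrum (Cpt M)) Phi"
  unfolding gelfand_spectrum_def continuous_map_in_subtopology
proof (intro conjI)
  show "continuous_map Y (product_topology (\<lambda>_. euclidean) (Cpt M)) Phi"
    unfolding continuous_map_componentwise
  proof (intro conjI ballI)
    show "Phi ` topspace Y \<subseteq> extensional (Cpt M)" unfolding Phi_def by (auto intro: restrict_extensional)
    fix f assume f: "f \<in> Cpt M"
    have "(\<lambda>y. Phi y f) = (\<lambda>y. f (sel y))" unfolding Phi_def using f by simp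
    then show "continuous_map Y euclidean (\<lambda>y. Phi y f)" using coord_cont[OF f] by simp
  qed
  show "Phi \<in> topspace Y \<rightarrow> {\<phi>. character (Cpt M) \<phi>}" using Phi_char by blast
qed

lemma Phi_inj: "inj_on Phi (topspace Y)"
proof (rule inj_onI, rule ccontr)
  fix y1 y2 assume y: "y1 \<in> topspace Y" "y2 \<in> topspace Y" "Phi y1 = Phi y2" "y1 \<noteq> y2"
  have nY: "normal_space Y" using compY hausY by (simp add: compact_Hausdorff_or_regular_imp_normal_space)
  have c1: "closedin Y {y1}" using closedin_Hausdorff_singleton[OF hausY y(1)] .
  have c2: "closedin Y {y2}" using closedin_Hausdorff_singleton[OF hausY y(2)] .
  have d: "disjnt {y1} {y2}" using y(4) by simp
  obtain g where g: "continuous_map Y euclideanreal g" "g ` {y1} \<subseteq> {0}" "g ` {y2} \<subseteq> {1}"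
    using Urysohn_lemma_alt[OF nY c1 c2 d, of "0::real" 1] by blast
  define f where "f B = (if quasipoint M B then complex_of_real (g (pi B)) else 0)" for B
  have fC: "f \<in> Cpt M"
  proof (rule CptI)
    have "continuous_map (quasipoint_space M) euclideanreal (\<lambda>B. g (pi B))"
      using continuous_map_compose[OF pi_cont g(1)] by (simp add: o_def)
    then have "continuous_map (quasipoint_space M) euclidean (\<lambda>B. complex_of_real (g (pi B)))"
      by (rule cm_of_real)
    then show "continuous_map (quasipoint_space M) euclidean f"
      by (rule continuous_map_eq) (simp add: f_def topspace_Q)
    show "\<And>B. \<not> quasipoint M B \<Longrightarrow> f B = 0" by (simp add: f_def)
    fix x B1 B2 assume o: "quasipoint_over M B1 x" "quasipoint_over M B2 x"
    then show "f B1 = f B2" unfolding f_def using pi_over[OF o(1)] pi_over[OF o(2)]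
      by (simp add: quasipoint_over_def)
  qed
  have "Phi y1 f = f (sel y1)" unfolding Phi_def using fC by simp
  also have "\<dots> = complex_of_real (g y1)" unfolding f_def using sel[OF y(1)] by simp
  finally have p1: "Phi y1 f = complex_of_real (g y1)" .
  have "Phi y2 f = f (sel y2)" unfolding Phi_def using fC by simp
  also have "\<dots> = complex_of_real (g y2)" unfolding f_def using sel[OF y(2)] by simp
  finally have p2: "Phi y2 f = complex_of_real (g y2)" .
  note p1 p2
  moreover have "g y1 = 0" "g y2 = 1" using g(2,3) by auto
  ultimately show False using y(3) by simp
qed

lemma Phi_surj: "Phi ` topspace Y = topspace (gelfand_spectrum (Cpt M))"
  unfolding topspace_gelfand
proof
  show "Phi ` topspace Y \<subseteq> (PiE (Cpt M) (\<lambda>_. UNIV)) \<inter> {\<phi>. character (Cpt M) \<phi>}"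
  proof
    fix \<phi> assume "\<phi> \<in> Phi ` topspace Y"
    then obtain y where y: "y \<in> topspace Y" "\<phi> = Phi y" by blast
    have "Phi y \<in> PiE (Cpt M) (\<lambda>_. UNIV)" unfolding PiE_iff Phi_def by (simp add: restrict_extensional)
    then show "\<phi> \<in> (PiE (Cpt M) (\<lambda>_. UNIV)) \<inter> {\<phi>. character (Cpt M) \<phi>}" using Phi_char[OF y(1)] y(2) by simp
  qed
  show "(PiE (Cpt M) (\<lambda>_. UNIV)) \<inter> {\<phi>. character (Cpt M) \<phi>} \<subseteq> Phi ` topspace Y"
  proof
    fix \<phi> assume "\<phi> \<in> (PiE (Cpt M) (\<lambda>_. UNIV)) \<inter> {\<phi>. character (Cpt M) \<phi>}"
    then have ch: "character (Cpt M) \<phi>" by simp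
    obtain B where B: "quasipoint M B" "\<forall>f\<in>Cpt M. \<phi> f = f B" using gelfand_point[OF ch] by blast
    define y where "y = pi B"
    have y: "y \<in> topspace Y" unfolding y_def using pi_prop(1)[OF B(1)] .
    have ext\<phi>: "\<phi> \<in> extensional (Cpt M)" using ch unfolding character_def by blast
    have "Phi y = \<phi>"
    proof
      fix f show "Phi y f = \<phi> f"
      proof (cases "f \<in> Cpt M")
        case True
        have "f (sel y) = f B" using fiber[OF True sel(1)[OF y] B(1)] sel(2)[OF y] y_def by simp
        then show ?thesis unfolding Phi_def using True B(2) by simp
      next
        case False
        have "Phi y f = undefined" unfolding Phi_def using False by simp
        moreover have "\<phi> f = undefined" by (rule extensional_arb[OF ext\<phi> False])
        ultimately show ?thesis by simp
      qed
    qed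
    then show "\<phi> \<in> Phi ` topspace Y" using y by blast
  qed
qed

lemma part1: "Y homeomorphic_space gelfand_spectrum (Cpt M)"
proof -
  have "homeomorphic_map Y (gelfand_spectrum (Cpt M)) Phi"
    using continuous_imp_homeomorphic_map[OF Phi_cont compY haus_gelfand Phi_surj Phi_inj] .
  then show ?thesis by (rule homeomorphic_map_imp_homeomorphic_space)
qed

lemma pi_inj_discrete:
  assumes disc: "M = discrete_topology (topspace M)"
  shows "inj_on pi (topspace (quasipoint_space M))"
proof (rule inj_onI, rule ccontr)
  fix B1 B2 assume a: "B1 \<in> topspace (quasipoint_space M)" "B2 \<in> topspace (quasipoint_space M)"
    "pi B1 = pi B2" "B1 \<noteq> B2"
  have q1: "quasipoint M B1" and q2: "quasipoint M B2" using a(1,2) by (auto simp: topspace_Q)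
  have "\<not> B1 \<subseteq> B2"
  proof
    assume "B1 \<subseteq> B2"
    then have "B2 = B1" using q1 qp_dual[OF q2] unfolding quasipoint_def by blast
    then show False using a(4) by simp
  qed
  then obtain U where U: "U \<in> B1" "U \<notin> B2" by blast
  have Uo: "openin M U" using qp_open[OF q1 U(1)] .
  obtain V where V: "V \<in> B2" "V \<inter> U = {}" using qp_max[OF q2 Uo U(2)] by blast
  have Vo: "openin M V" using qp_open[OF q2 V(1)] .
  define u where "u x = (if x \<in> U then 1 else (0::real))" for x
  have uc: "continuous_map M euclideanreal u"
  proof -
    have eq: "M = discrete_topology (topspace M)" by (rule disc)
    show ?thesis by (subst eq) (simp add: continuous_map_from_discrete_topology)
  qed
  have "bounded (u ` topspace M)"
  proof (rule bounded_subset)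
    show "bounded {0::real, 1}" by (rule finite_imp_bounded) simp
    show "u ` topspace M \<subseteq> {0, 1}" unfolding u_def by auto
  qed
  then obtain g where g: "continuous_map Y euclideanreal g" "\<forall>x\<in>topspace M. g (e x) = u x"
    using ext[OF uc] by blast
  have cl: "closedin Y {y \<in> topspace Y. g y \<in> {c}}" for c
    using closedin_continuous_map_preimage[OF g(1)] by (metis closed_closedin closed_singleton)
  have "pr U \<subseteq> {y \<in> topspace Y. g y \<in> {1}}" unfolding pr_def
  proof (rule closure_of_minimal[OF _ cl])
    show "e ` U \<subseteq> {y \<in> topspace Y. g y \<in> {1}}"
    proof
      fix y assume "y \<in> e ` U"
      then obtain x where x: "x \<in> U" "y = e x" by blast
      have xM: "x \<in> topspace M" using x(1) Uo openin_subset by blast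
      show "y \<in> {y \<in> topspace Y. g y \<in> {1}}" using g(2) xM x eM[OF xM] by (simp add: u_def)
    qed
  qed
  moreover have "pi B1 \<in> pr U" using pi_prop(2)[OF q1] U(1) by blast
  ultimately have g1: "g (pi B1) = 1" by blast
  have "pr V \<subseteq> {y \<in> topspace Y. g y \<in> {0}}" unfolding pr_def
  proof (rule closure_of_minimal[OF _ cl])
    show "e ` V \<subseteq> {y \<in> topspace Y. g y \<in> {0}}"
    proof
      fix y assume "y \<in> e ` V"
      then obtain x where x: "x \<in> V" "y = e x" by blast
      have xM: "x \<in> topspace M" using x(1) Vo openin_subset by blast
      have "x \<notin> U" using x(1) V(2) by blast
      then show "y \<in> {y \<in> topspace Y. g y \<in> {0}}" using g(2) xM x eM[OF xM] by (simp add: u_def)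
    qed
  qed
  moreover have "pi B2 \<in> pr V" using pi_prop(2)[OF q2] V(1) by blast
  ultimately have g2: "g (pi B2) = 0" by blast
  show False using g1 g2 a(3) by simp
qed

lemma part2:
  assumes "M = discrete_topology (topspace M)"
  shows "Y homeomorphic_space quasipoint_space M"
proof -
  have "homeomorphic_map (quasipoint_space M) Y pi"
    using continuous_imp_homeomorphic_map[OF pi_cont compact_Q hausY pi_surj pi_inj_discrete[OF assms]] .
  then have "quasipoint_space M homeomorphic_space Y" by (rule homeomorphic_map_imp_homeomorphic_space)
  then show ?thesis by (rule homeomorphic_space_sym[THEN iffD1])
qed

end

theorem corollary2p46:
  fixes M :: "'a topology"
  assumes "completely_regular_space M" and "Hausdorff_space M"
  shows "(\<forall>(Y :: 'b topology) e. stone_cech M Y e \<longrightarrow>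
            Y homeomorphic_space gelfand_spectrum (Cpt M)) \<and>
         (M = discrete_topology (topspace M) \<longrightarrow>
            (\<forall>(Y :: 'b topology) e. stone_cech M Y e \<longrightarrow>
               Y homeomorphic_space quasipoint_space M))"
proof (intro conjI allI impI)
  fix Y :: "'b topology" and e assume "stone_cech M Y e"
  then show "Y homeomorphic_space gelfand_spectrum (Cpt M)"
    by (intro SCL.part1) (rule SCL.intro)
next
  fix Y :: "'b topology" and e assume "M = discrete_topology (topspace M)" "stone_cech M Y e"
  then show "Y homeomorphic_space quasipoint_space M"
    using SCL.part2[OF SCL.intro] by blast
qed

end
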